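(* Fix $\alpha\in(0,1)$. In the one-sided weakly dependent Gaussian testing model described in the context, suppose $n_1\to\infty$ and $n_1/n\to p_1\in(0,1]$ as $n\to\infty$, and let $\mu_{n_1}=\max\{\mu_i: i\in\mathcal I_1\}$. If $\lim_{n_1\to\infty}\frac{\sqrt{2\log n_1}}{\mu_{n_1}}$ exists and is strictly less than $1$, then for both the adjusted Bonferroni procedure and the Sidak procedure, $\lim_{n\to\infty}AnyPwr=1$.
   Context: $\Phi$ denotes the standard normal distribution function. Let $(\rho_{ij})_{i,j\ge1}$ be a symmetric array with $\rho_{ii}=1$ and $\rho_{ij}\in(-1,1)$ for $i\ne j$, such that for each $n$ the matrix $\Sigma_n=(\rho_{ij})_{1\le i,j\le n}$ is a valid correlation matrix. Put $\rho_m=\sup_{i\ge1}|\rho_{i,\,i+m}|$ and assume the weak dependence condition: $\gamma:=\sup_{m\ge 1}\rho_m<1$ and $\rho_m=o(1/\log m)$ as $m\to\infty$. For each $n$ one observes $(X_1,\dots,X_n)$, jointly Gaussian with $\mathbb{E}X_i=\mu_i$ (the means may depend on $n$), $\mathrm{Var}(X_i)=1$ and correlation matrix $\Sigma_n$. One tests $H_{0i}:\mu_i=0$ versus $H_{1i}:\mu_i>0$, $i=1,\dots,n$. Let $\mathcal I_1=\{i\le n:\mu_i>0\}$ be the set of false nulls (every $\mu_i$ is either $0$ or positive), $n_1=|\mathcal I_1|$. The adjusted Bonferroni procedure rejects $H_{0i}$ iff $X_i>c_{Bon}(n,\alpha):=\Phi^{-1}\bigl(1-\frac{-\log(1-\alpha)}{n}\bigr)$;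 the Sidak procedure rejects $H_{0i}$ iff $X_i>c_{Sid}(n,\alpha):=\Phi^{-1}\bigl((1-\alpha)^{1/n}\bigr)$. For a procedure with common cutoff $c$, $AnyPwr=\mathbb{P}\bigl(X_i>c\text{ for some }i\in\mathcal I_1\bigr)$, the probability of at least one true rejection. *)

theory Defs
  imports "HOL-Probability.Probability"
begin

definition Phi :: "real \<Rightarrow> real" where
  "Phi x = measure (density lborel std_normal_density) {..x}"

definition Phi_inv :: "real \<Rightarrow> real" where
  "Phi_inv p = (THE x. Phi x = p)"

definition gaussian_law :: "'a measure \<Rightarrow> ('a \<Rightarrow> real) \<Rightarrow> real \<Rightarrow> real \<Rightarrow> bool" where
  "gaussian_law M Y m v \<longleftrightarrow>
     (v > 0 \<and> distributed M lborel Y (normal_density m (sqrt v))) \<or>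
     (v = 0 \<and> Y \<in> borel_measurable M \<and> (AE \<omega> in M. Y \<omega> = m))"

definition jointly_gaussian ::
  "'a measure \<Rightarrow> nat set \<Rightarrow> (nat \<Rightarrow> 'a \<Rightarrow> real) \<Rightarrow> (nat \<Rightarrow> real) \<Rightarrow> (nat \<Rightarrow> nat \<Rightarrow> real) \<Rightarrow> bool" where
  "jointly_gaussian M I X mu C \<longleftrightarrow>
     (\<forall>i\<in>I. X i \<in> borel_measurable M) \<and>
     (\<forall>a :: nat \<Rightarrow> real. gaussian_law M (\<lambda>\<omega>. \<Sum>i\<in>I. a i * X i \<omega>)
          (\<Sum>i\<in>I. a i * mu i) (\<Sum>i\<in>I. \<Sum>j\<in>I. a i * a j * C i j))"

definition psd_on :: "nat \<Rightarrow> (nat \<Rightarrow> nat \<Rightarrow> real) \<Rightarrow> bool" where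
  "psd_on n C \<longleftrightarrow> (\<forall>a :: nat \<Rightarrow> real. (\<Sum>i\<in>{1..n}. \<Sum>j\<in>{1..n}. a i * a j * C i j) \<ge> 0)"

definition rho_lag :: "(nat \<Rightarrow> nat \<Rightarrow> real) \<Rightarrow> nat \<Rightarrow> real" where
  "rho_lag \<rho> m = (SUP i\<in>{1..}. \<bar>\<rho> i (i + m)\<bar>)"

definition c_Bon :: "nat \<Rightarrow> real \<Rightarrow> real" where
  "c_Bon n \<alpha> = Phi_inv (1 - (- ln (1 - \<alpha>)) / real n)"

definition c_Sid :: "nat \<Rightarrow> real \<Rightarrow> real" where
  "c_Sid n \<alpha> = Phi_inv ((1 - \<alpha>) powr (1 / real n))"

definition AnyPwr :: "'a measure \<Rightarrow> nat set \<Rightarrow> (nat \<Rightarrow> 'a \<Rightarrow> real) \<Rightarrow> real \<Rightarrow> real" where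
  "AnyPwr M I1 X c = measure M {\<omega> \<in> space M. \<exists>i\<in>I1. X i \<omega> > c}"

end

theory Submission imports Defs begin

abbreviation "DN \<equiv> density lborel std_normal_density"

lemma DN_real: "real_distribution DN"
  unfolding real_distribution_def real_distribution_axioms_def
  using prob_space_normal_density by auto

lemma Phi_cdf: "Phi = cdf DN"
  by (auto simp: Phi_def cdf_def)

lemma Phi_cont: "isCont Phi x"
proof -
  interpret real_distribution DN by (rule DN_real)
  have "emeasure DN {x} = 0"
    by (simp add: emeasure_density nn_integral_indicator_singleton)
  then have "measure DN {x} = 0" by (simp add: measure_def)
  then show ?thesis unfolding Phi_cdf using isCont_cdf by blast
qed

lemma Phi_mono: "x \<le> y \<Longrightarrow> Phi x \<le> Phi y"
proof -
  interpret real_distribution DN by (rule DN_real)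
  show "x \<le> y \<Longrightarrow> Phi x \<le> Phi y" unfolding Phi_cdf by (rule cdf_nondecreasing)
qed

lemma Phi_strict: assumes "x < y" shows "Phi x < Phi y"
proof -
  interpret real_distribution DN by (rule DN_real)
  define c where "c = (1 / sqrt (2 * pi)) * exp (- (x^2 + y^2) / 2)"
  have cpos: "c > 0" unfolding c_def by simp
  have le: "ennreal c * indicator {x<..y} z \<le> ennreal (std_normal_density z) * indicator {x<..y} z" for z
  proof (cases "z \<in> {x<..y}")
    case True
    then have "\<bar>z\<bar> \<le> \<bar>x\<bar> \<or> \<bar>z\<bar> \<le> \<bar>y\<bar>" by auto
    then have "z^2 \<le> x^2 \<or> z^2 \<le> y^2" by (auto simp: abs_le_square_iff)
    then have "z^2 \<le> x^2 + y^2" by (auto intro: add_increasing add_increasing2)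
    then have "exp (- (x^2 + y^2) / 2) \<le> exp (- (z^2) / 2)" by simp
    then have "c \<le> std_normal_density z" unfolding c_def std_normal_density_def
      by (intro mult_left_mono) auto
    then show ?thesis using True by (simp add: ennreal_leI indicator_def)
  qed simp
  have "ennreal (c * (y - x)) = (\<integral>\<^sup>+z. ennreal c * indicator {x<..y} z \<partial>lborel)"
    using assms cpos by (simp add: nn_integral_cmult_indicator ennreal_mult)
  also have "\<dots> \<le> (\<integral>\<^sup>+z. ennreal (std_normal_density z) * indicator {x<..y} z \<partial>lborel)"
    by (intro nn_integral_mono le)
  also have "\<dots> = emeasure DN {x<..y}" by (simp add: emeasure_density)
  also have "\<dots> = ennreal (measure DN {x<..y})" by (simp add: emeasure_eq_measure)
  finally have "c * (y - x) \<le> measure DN {x<..y}"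
    by (simp add: ennreal_le_iff)
  moreover have "c * (y - x) > 0" using cpos assms by simp
  ultimately show ?thesis using cdf_diff_eq[OF assms] unfolding Phi_cdf by linarith
qed

lemma Phi_tail: assumes "t \<ge> 1" shows "1 - Phi t \<le> exp (- (t^2) / 2)"
proof -
  interpret real_distribution DN by (rule DN_real)
  have c: "1 - Phi t = measure DN {t<..}"
  proof -
    have "measure DN (space DN - {..t}) = 1 - measure DN {..t}"
      by (intro prob_compl) simp
    moreover have "space DN - {..t} = {t<..}" by auto
    ultimately show ?thesis by (simp add: Phi_def)
  qed
  have le: "ennreal (std_normal_density z) * indicator {t<..} z \<le> ennreal (z * std_normal_density z) * indicator {t..} z" for z
  proof (cases "z > t")
    case True
    then have "std_normal_density z \<le> z * std_normal_density z"
      using assms by (intro mult_le_cancel_right1[THEN iffD2]) (simp add: normal_density_pos not_less)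
    then show ?thesis using True by (simp add: ennreal_leI)
  qed (simp add: indicator_def)
  have D: "DERIV (\<lambda>z. - std_normal_density z) z :> z * std_normal_density z" for z
    unfolding std_normal_density_def
    by (auto intro!: derivative_eq_intros simp: field_simps power2_eq_square)
  have L: "((\<lambda>z. - std_normal_density z) \<longlongrightarrow> 0) at_top"
  proof -
    have "filterlim (\<lambda>z::real. z^2 / 2) at_top at_top"
    proof (rule filterlim_at_top_mono[OF filterlim_ident])
      show "\<forall>\<^sub>F z in at_top. z \<le> (z::real)^2 / 2"
        using eventually_ge_at_top[of "2::real"]
        by eventually_elim (simp add: power2_eq_square field_simps)
    qed
    then have "filterlim (\<lambda>z::real. - (z^2) / 2) at_bot at_top"
      using filterlim_compose[OF filterlim_uminus_at_bot_at_top] by simp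
    then have "((\<lambda>z::real. exp (- (z^2) / 2)) \<longlongrightarrow> 0) at_top"
      by (rule filterlim_compose[OF exp_at_bot])
    then have "((\<lambda>z::real. - ((1 / sqrt (2 * pi)) * exp (- (z^2) / 2))) \<longlongrightarrow> - ((1 / sqrt (2 * pi)) * 0)) at_top"
      by (intro tendsto_intros)
    then show ?thesis unfolding std_normal_density_def by simp
  qed
  have "emeasure DN {t<..} = (\<integral>\<^sup>+z. ennreal (std_normal_density z) * indicator {t<..} z \<partial>lborel)"
    by (simp add: emeasure_density)
  also have "\<dots> \<le> (\<integral>\<^sup>+z. ennreal (z * std_normal_density z) * indicator {t..} z \<partial>lborel)"
    by (intro nn_integral_mono le)
  also have "\<dots> = ennreal (0 - (- std_normal_density t))"
    using assms
    by (intro nn_integral_FTC_atLeast[OF _ D _ L]) (auto simp: normal_density_pos less_imp_le)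
  finally have "measure DN {t<..} \<le> std_normal_density t"
    by (simp add: emeasure_eq_measure ennreal_le_iff)
  also have "\<dots> \<le> exp (- (t^2) / 2)"
  proof -
    have "1 / sqrt (2 * pi) \<le> 1" using pi_gt3 by (simp add: divide_le_eq real_le_rsqrt)
    then show ?thesis unfolding std_normal_density_def
      by (intro mult_left_le_one_le) auto
  qed
  finally show ?thesis using c by simp
qed


lemma Phi_inv_le:
  assumes p: "0 < p" "p < 1" and t: "t \<ge> 1" and e: "exp (- (t^2) / 2) \<le> 1 - p"
  shows "Phi_inv p \<le> t"
proof -
  interpret real_distribution DN by (rule DN_real)
  have pt: "p \<le> Phi t" using Phi_tail[OF t] e by linarith
  have pt1: "p < Phi (t + 1)" using Phi_strict[of t "t+1"] pt by linarith
  have "(Phi \<longlongrightarrow> 0) at_bot" unfolding Phi_cdf by (rule cdf_lim_at_bot)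
  then have "\<forall>\<^sub>F y in at_bot. Phi y < p" using p(1) by (rule order_tendstoD(2))
  then obtain N where N: "\<And>y. y \<le> N \<Longrightarrow> Phi y < p" by (auto simp: eventually_at_bot_linorder)
  define y where "y = min N t"
  have y: "Phi y < p" "y \<le> t + 1" using N by (auto simp: y_def)
  have "\<exists>x. y \<le> x \<and> x \<le> t + 1 \<and> Phi x = p"
    using IVT[of Phi y p "t + 1"] y pt1 Phi_cont by fastforce
  then obtain x where x: "Phi x = p" by blast
  have uniq: "x' = x" if "Phi x' = p" for x'
  proof (rule ccontr)
    assume "x' \<noteq> x"
    then have "x' < x \<or> x < x'" by linarith
    then show False using Phi_strict[of x' x] Phi_strict[of x x'] that x by force
  qed
  have "Phi_inv p = x" unfolding Phi_inv_def
    using x uniq by (rule the_equality)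
  moreover have "x \<le> t"
  proof (rule ccontr)
    assume "\<not> x \<le> t"
    then have "Phi t < Phi x" by (intro Phi_strict) auto
    then show False using pt x by linarith
  qed
  ultimately show ?thesis by simp
qed

lemma power_part:
  fixes M :: "'a measure" and X :: "nat \<Rightarrow> 'a \<Rightarrow> real"
  assumes P: "prob_space M"
    and G: "jointly_gaussian M {1..n} X mu \<rho>"
    and diag: "\<rho> k k = 1"
    and I: "I \<subseteq> {1..n}" "k \<in> I"
    and c: "c < mu k"
  shows "AnyPwr M I X c \<ge> 1 - 1 / (mu k - c)^2"
proof -
  interpret prob_space M by (rule P)
  have k: "k \<in> {1..n}" using I by auto
  have mX: "\<And>i. i \<in> {1..n} \<Longrightarrow> X i \<in> borel_measurable M" using G by (simp add: jointly_gaussian_def)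
  define a where "a = (\<lambda>i::nat. if i = k then 1 else (0::real))"
  have gl: "gaussian_law M (\<lambda>\<omega>. \<Sum>i\<in>{1..n}. a i * X i \<omega>)
          (\<Sum>i\<in>{1..n}. a i * mu i) (\<Sum>i\<in>{1..n}. \<Sum>j\<in>{1..n}. a i * a j * \<rho> i j)"
    using G by (simp add: jointly_gaussian_def)
  have sel: "(\<Sum>i\<in>{1..n}. a i * f i) = f k" for f :: "nat \<Rightarrow> real"
  proof -
    have "(\<Sum>i\<in>{1..n}. a i * f i) = (\<Sum>i\<in>{1..n}. if i = k then f k else 0)"
      by (rule sum.cong) (auto simp: a_def)
    then show ?thesis using k by simp
  qed
  have e1: "(\<lambda>\<omega>. \<Sum>i\<in>{1..n}. a i * X i \<omega>) = X k"
    using sel[of "\<lambda>i. X i _"] by auto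
  have e2: "(\<Sum>i\<in>{1..n}. a i * mu i) = mu k" by (rule sel)
  have e3: "(\<Sum>i\<in>{1..n}. \<Sum>j\<in>{1..n}. a i * a j * \<rho> i j) = 1"
  proof -
    have "(\<Sum>i\<in>{1..n}. \<Sum>j\<in>{1..n}. a i * a j * \<rho> i j) = (\<Sum>i\<in>{1..n}. a i * (\<Sum>j\<in>{1..n}. a j * \<rho> i j))"
      by (simp add: sum_distrib_left mult.assoc)
    also have "\<dots> = (\<Sum>i\<in>{1..n}. a i * \<rho> i k)"
    proof -
      have inner: "(\<Sum>j\<in>{1..n}. a j * \<rho> i j) = \<rho> i k" for i by (rule sel)
      show ?thesis by (simp only: inner)
    qed
    also have "\<dots> = 1" using sel[of "\<lambda>i. \<rho> i k"] diag by simp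
    finally show ?thesis .
  qed
  have D: "distributed M lborel (X k) (normal_density (mu k) 1)"
    using gl unfolding e1 e2 e3 gaussian_law_def by simp
  have mk[measurable]: "X k \<in> borel_measurable M" using mX k by blast
  have EX: "expectation (X k) = mu k" by (rule normal_distributed_expectation[OF _ D]) simp
  have VX: "variance (X k) = 1" using normal_distributed_variance[OF _ D] by simp
  have "integrable lborel (\<lambda>x. normal_density (mu k) 1 x * (x - mu k)^2 + 2 * mu k * (normal_density (mu k) 1 x * x) - (mu k)^2 * normal_density (mu k) 1 x)"
    by (intro Bochner_Integration.integrable_diff Bochner_Integration.integrable_add integrable_mult_right integrable_normal_moment integrable_normal_moment_nz_1 integrable_normal_density; simp)
  then have "integrable lborel (\<lambda>x. normal_density (mu k) 1 x * x^2)"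
    by (rule Bochner_Integration.integrable_cong[THEN iffD1, rotated -1]) (auto simp: power2_eq_square algebra_simps)
  then have int2: "integrable M (\<lambda>x. X k x ^ 2)"
    using distributed_integrable[OF D, of "\<lambda>x. x^2"] by simp
  define d where "d = mu k - c"
  have d: "d > 0" using c by (simp add: d_def)
  have cheb: "prob {x\<in>space M. d \<le> \<bar>X k x - mu k\<bar>} \<le> 1 / d^2"
    using Chebyshev_inequality[OF _ int2 d] EX VX by simp
  have "prob {x\<in>space M. X k x \<le> c} \<le> prob {x\<in>space M. d \<le> \<bar>X k x - mu k\<bar>}"
    by (intro finite_measure_mono) (auto simp: d_def)
  then have low: "prob {x\<in>space M. X k x \<le> c} \<le> 1 / d^2" using cheb by linarith
  have compl: "prob (space M - {x\<in>space M. X k x \<le> c}) = 1 - prob {x\<in>space M. X k x \<le> c}"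
    by (intro prob_compl) measurable
  have "space M - {x\<in>space M. X k x \<le> c} \<subseteq> {\<omega> \<in> space M. \<exists>i\<in>I. X i \<omega> > c}"
    using I by (auto simp: not_le)
  moreover have "{\<omega> \<in> space M. \<exists>i\<in>I. X i \<omega> > c} \<in> events"
  proof -
    have fin: "finite I" using finite_subset[OF I(1)] by simp
    have eq: "{\<omega> \<in> space M. \<exists>i\<in>I. X i \<omega> > c} = (\<Union>i\<in>I. {\<omega> \<in> space M. X i \<omega> > c})" by auto
    have "\<And>i. i \<in> I \<Longrightarrow> {\<omega> \<in> space M. X i \<omega> > c} \<in> events"
    proof -
      fix i assume "i \<in> I"
      then have [measurable]: "X i \<in> borel_measurable M" using mX I by blast
      show "{\<omega> \<in> space M. X i \<omega> > c} \<in> events" by measurable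
    qed
    then show ?thesis unfolding eq using fin by (intro sets.finite_UN) auto
  qed
  ultimately have "prob (space M - {x\<in>space M. X k x \<le> c}) \<le> AnyPwr M I X c"
    unfolding AnyPwr_def by (rule finite_measure_mono)
  then show ?thesis using compl low unfolding d_def by linarith
qed


lemma cut_bound:
  assumes a: "a > 0" and n: "2 * a \<le> real n" and p: "0 < p" "p < 1"
    and e: "a / (2 * real n) \<le> 1 - p"
  shows "Phi_inv p \<le> sqrt (2 * ln (real n)) + sqrt (2 * \<bar>ln (2 / a)\<bar>)"
proof -
  have npos: "real n > 0" using a n by linarith
  define x where "x = 2 * real n / a"
  have x4: "x \<ge> 4" using n a by (simp add: x_def field_simps)
  have "ln (inverse x) \<le> inverse x - 1" using x4 by (intro ln_le_minus_one) simp
  then have "ln x \<ge> 1 - inverse x" using x4 by (simp add: ln_inverse)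
  moreover have "inverse x \<le> 1/4" using x4 by (simp add: field_simps)
  ultimately have lnx: "ln x \<ge> 1/2" by linarith
  define t where "t = sqrt (2 * ln x)"
  have t2: "t^2 = 2 * ln x" unfolding t_def using lnx by simp
  have t1: "t \<ge> 1" unfolding t_def using lnx by (simp add: real_le_rsqrt)
  have "exp (- (t^2) / 2) = exp (- ln x)" using t2 by simp
  also have "\<dots> = inverse x" using x4 by (simp add: exp_minus)
  also have "\<dots> = a / (2 * real n)" by (simp add: x_def)
  finally have "exp (- (t^2) / 2) \<le> 1 - p" using e by simp
  then have "Phi_inv p \<le> t" using Phi_inv_le[OF p t1] by simp
  also have "t \<le> sqrt (2 * ln (real n)) + sqrt (2 * \<bar>ln (2 / a)\<bar>)"
  proof -
    have lx: "ln x = ln (real n) + ln (2 / a)"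
    proof -
      have "x = real n * (2 / a)" by (simp add: x_def)
      then show ?thesis using npos a by (simp only: ln_mult[of "real n" "2 / a"]) simp
    qed
    have "n \<ge> 1" using npos by simp
    then have "real n \<ge> 1" by simp
    then have ln0: "ln (real n) \<ge> 0" by simp
    have "t \<le> sqrt (2 * ln (real n) + 2 * \<bar>ln (2 / a)\<bar>)" unfolding t_def lx by simp
    also have "\<dots> \<le> sqrt (2 * ln (real n)) + sqrt (2 * \<bar>ln (2 / a)\<bar>)"
      using ln0 by (intro sqrt_add_le_add_sqrt) auto
    finally show ?thesis .
  qed
  finally show ?thesis .
qed

lemma cBon_bound:
  assumes a: "a = - ln (1 - \<alpha>)" "0 < \<alpha>" "\<alpha> < 1" and n: "2 * a \<le> real n"
  shows "c_Bon n \<alpha> \<le> sqrt (2 * ln (real n)) + sqrt (2 * \<bar>ln (2 / a)\<bar>)"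
proof -
  have apos: "a > 0" using a by simp
  have npos: "real n > 0" using apos n by linarith
  have an: "a / real n \<le> 1/2" using n npos by (simp add: field_simps)
  have "Phi_inv (1 - a / real n) \<le> sqrt (2 * ln (real n)) + sqrt (2 * \<bar>ln (2 / a)\<bar>)"
  proof (rule cut_bound[OF apos n])
    show "0 < 1 - a / real n" using an by linarith
    show "1 - a / real n < 1" using apos npos by simp
    show "a / (2 * real n) \<le> 1 - (1 - a / real n)" using apos npos by (simp add: field_simps)
  qed
  then show ?thesis unfolding c_Bon_def a by simp
qed

lemma cSid_bound:
  assumes a: "a = - ln (1 - \<alpha>)" "0 < \<alpha>" "\<alpha> < 1" and n: "2 * a \<le> real n"
  shows "c_Sid n \<alpha> \<le> sqrt (2 * ln (real n)) + sqrt (2 * \<bar>ln (2 / a)\<bar>)"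
proof -
  have apos: "a > 0" using a by simp
  have npos: "real n > 0" using apos n by linarith
  define y where "y = a / real n"
  have y: "0 < y" "y \<le> 1/2" using n npos apos by (auto simp: y_def field_simps)
  have p: "(1 - \<alpha>) powr (1 / real n) = exp (- y)"
    using a by (simp add: powr_def y_def)
  have "exp y \<ge> 1 + y" by (rule exp_ge_add_one_self)
  then have "exp (- y) \<le> 1 / (1 + y)" using y by (simp add: exp_minus field_simps)
  also have "1 / (1 + y) \<le> 1 - y / 2"
  proof -
    have "1 \<le> (1 - y/2) * (1 + y)" using y by (simp add: algebra_simps power2_eq_square)
    then show ?thesis using y by (simp add: field_simps)
  qed
  finally have ey: "exp (- y) \<le> 1 - y / 2" .
  have "Phi_inv (exp (- y)) \<le> sqrt (2 * ln (real n)) + sqrt (2 * \<bar>ln (2 / a)\<bar>)"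
  proof (rule cut_bound[OF apos n])
    show "0 < exp (- y)" by simp
    show "exp (- y) < 1" using y by simp
    show "a / (2 * real n) \<le> 1 - exp (- y)" using ey by (simp add: y_def)
  qed
  then show ?thesis unfolding c_Sid_def p by simp
qed

theorem theorem4p1:
  fixes \<alpha> :: real and \<rho> :: "nat \<Rightarrow> nat \<Rightarrow> real"
    and M :: "nat \<Rightarrow> 'a measure" and X :: "nat \<Rightarrow> nat \<Rightarrow> 'a \<Rightarrow> real"
    and \<mu> :: "nat \<Rightarrow> nat \<Rightarrow> real" and p1 :: real
  defines "I1 \<equiv> (\<lambda>n. {i \<in> {1..n}. \<mu> n i > 0})"
  defines "n1 \<equiv> (\<lambda>n. card (I1 n))"
  defines "mu_max \<equiv> (\<lambda>n. Max (\<mu> n ` I1 n))"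
  assumes alpha: "0 < \<alpha>" "\<alpha> < 1"
    and rho_sym: "\<And>i j. \<rho> i j = \<rho> j i"
    and rho_diag: "\<And>i. \<rho> i i = 1"
    and rho_off: "\<And>i j. i \<noteq> j \<Longrightarrow> \<bar>\<rho> i j\<bar> < 1"
    and rho_psd: "\<And>n. psd_on n \<rho>"
    and weak_dep1: "(SUP m\<in>{1..}. rho_lag \<rho> m) < 1"
    and weak_dep2: "(\<lambda>m. rho_lag \<rho> m * ln (real m)) \<longlonglongrightarrow> 0"
    and prob: "\<And>n. prob_space (M n)"
    and gauss: "\<And>n. jointly_gaussian (M n) {1..n} (X n) (\<mu> n) \<rho>"
    and mu_nonneg: "\<And>n i. i \<in> {1..n} \<Longrightarrow> \<mu> n i \<ge> 0"
    and n1_inf: "filterlim (\<lambda>n. real (n1 n)) at_top sequentially"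
    and p1: "0 < p1" "p1 \<le> 1"
    and n1_ratio: "(\<lambda>n. real (n1 n) / real n) \<longlonglongrightarrow> p1"
    and signal: "\<exists>L < 1. (\<lambda>n. sqrt (2 * ln (real (n1 n))) / mu_max n) \<longlonglongrightarrow> L"
  shows "(\<lambda>n. AnyPwr (M n) (I1 n) (X n) (c_Bon n \<alpha>)) \<longlonglongrightarrow> 1 \<and>
         (\<lambda>n. AnyPwr (M n) (I1 n) (X n) (c_Sid n \<alpha>)) \<longlonglongrightarrow> 1"
proof -
  define a where "a = - ln (1 - \<alpha>)"
  have apos: "a > 0" using alpha by (simp add: a_def)
  obtain L where L: "L < 1" "(\<lambda>n. sqrt (2 * ln (real (n1 n))) / mu_max n) \<longlonglongrightarrow> L"
    using signal by blast
  define q where "q = (max L 0 + 1) / 2"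
  have q: "0 < q" "q < 1" "L < q" using L(1) by (auto simp: q_def max_def)
  define k1 where "k1 = sqrt (2 * ln (2 / p1))"
  define k2 where "k2 = sqrt (2 * \<bar>ln (2 / a)\<bar>)"
  have lnp1: "ln (2 / p1) \<ge> 0" using p1 by simp
  have ev1: "\<forall>\<^sub>F n in sequentially. 1 \<le> real (n1 n)"
    using n1_inf unfolding filterlim_at_top by blast
  have ev2: "\<forall>\<^sub>F n in sequentially. sqrt (2 * ln (real (n1 n))) / mu_max n < q"
    using L(2) q(3) by (rule order_tendstoD(2))
  have ev3: "\<forall>\<^sub>F n in sequentially. p1 / 2 < real (n1 n) / real n"
    using n1_ratio by (rule order_tendstoD(1)) (use p1 in simp)
  have ev4: "\<forall>\<^sub>F n in sequentially. 2 * a \<le> real n"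
    using filterlim_real_sequentially unfolding filterlim_at_top by blast
  have lnlim: "filterlim (\<lambda>n. ln (real n)) at_top sequentially"
    by (rule filterlim_compose[OF ln_at_top filterlim_real_sequentially])
  have main: "(\<lambda>n. AnyPwr (M n) (I1 n) (X n) (cc n)) \<longlonglongrightarrow> 1"
    if hcc: "\<forall>\<^sub>F n in sequentially. cc n \<le> sqrt (2 * ln (real n)) + k2" for cc :: "nat \<Rightarrow> real"
  proof (rule order_tendstoI)
    fix b :: real assume "1 < b"
    then show "\<forall>\<^sub>F n in sequentially. AnyPwr (M n) (I1 n) (X n) (cc n) < b"
    proof -
      have "AnyPwr (M n) (I1 n) (X n) (cc n) \<le> 1" for n
        unfolding AnyPwr_def using prob_space.prob_le_1[OF prob] by blast
      then show ?thesis using \<open>1 < b\<close> by (intro always_eventually) (auto intro: le_less_trans)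
    qed
  next
    fix b :: real assume b: "b < 1"
    define B where "B = 2 / sqrt (1 - b)"
    have Bpos: "B > 0" using b by (simp add: B_def)
    have B2: "1 / B^2 = (1 - b) / 4" using b by (simp add: B_def power_divide)
    define W where "W = (q * B + k1 + q * k2) / (1 - q)"
    have ev5: "\<forall>\<^sub>F n in sequentially. W^2 / 2 \<le> ln (real n)"
      using lnlim unfolding filterlim_at_top by blast
    show "\<forall>\<^sub>F n in sequentially. b < AnyPwr (M n) (I1 n) (X n) (cc n)"
      using ev1 ev2 ev3 ev4 ev5 hcc
    proof eventually_elim
      case (elim n)
      let ?mm = "mu_max n"
      let ?w = "sqrt (2 * ln (real n))"
      have I1sub: "I1 n \<subseteq> {1..n}" by (auto simp: I1_def)
      have fin: "finite (I1 n)" using finite_subset[OF I1sub] by simp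
      have ne: "I1 n \<noteq> {}" using elim(1) by (auto simp: n1_def)
      have "?mm \<in> \<mu> n ` I1 n" unfolding mu_max_def using fin ne by (intro Max_in) auto
      then obtain k where k: "k \<in> I1 n" "\<mu> n k = ?mm" by auto
      have mmpos: "?mm > 0" using k by (auto simp: I1_def)
      have npos: "real n > 0" using elim(4) apos by linarith
      have ln1: "ln (real (n1 n)) \<ge> 0" using elim(1) by simp
      have "real (n1 n) \<ge> p1 / 2 * real n" using elim(3) npos by (simp add: field_simps)
      then have "ln (real (n1 n)) \<ge> ln (p1 / 2 * real n)" using p1 npos by (intro ln_mono) auto
      also have "ln (p1 / 2 * real n) = ln (real n) - ln (2 / p1)"
        using p1 npos by (simp add: ln_mult ln_div)
      finally have lnn1: "ln (real n) \<le> ln (real (n1 n)) + ln (2 / p1)" by linarith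
      have "?w \<le> sqrt (2 * ln (real (n1 n)) + 2 * ln (2 / p1))" using lnn1 by simp
      also have "\<dots> \<le> sqrt (2 * ln (real (n1 n))) + k1" unfolding k1_def
        using ln1 lnp1 by (intro sqrt_add_le_add_sqrt) auto
      finally have w1: "?w \<le> sqrt (2 * ln (real (n1 n))) + k1" .
      have w2: "sqrt (2 * ln (real (n1 n))) < q * ?mm" using elim(2) mmpos by (simp add: divide_less_eq)
      have "sqrt (W^2) \<le> ?w" using elim(5) by (intro real_sqrt_le_mono) linarith
      then have w3: "W \<le> ?w" by simp
      have w4: "cc n \<le> ?w + k2" using elim(6) .
      have "W * (1 - q) = q * B + k1 + q * k2" using q by (simp add: W_def)
      moreover have "W * (1 - q) \<le> ?w * (1 - q)" using w3 q by (intro mult_right_mono) auto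
      ultimately have w5: "q * B + k1 + q * k2 \<le> ?w * (1 - q)" by linarith
      have "q * cc n \<le> q * (?w + k2)" using w4 q by (intro mult_left_mono) auto
      then have "q * (?mm - cc n) \<ge> q * ?mm - q * (?w + k2)" by (simp add: algebra_simps)
      then have "q * (?mm - cc n) > q * B" using w1 w2 w5 by (simp add: algebra_simps)
      then have gap: "?mm - cc n > B" using q by simp
      have "AnyPwr (M n) (I1 n) (X n) (cc n) \<ge> 1 - 1 / (\<mu> n k - cc n)^2"
        using gap Bpos k
        by (intro power_part[OF prob gauss rho_diag I1sub k(1)]) auto
      moreover have "1 / (\<mu> n k - cc n)^2 \<le> 1 / B^2"
        using gap Bpos k by (intro divide_left_mono power_mono) auto
      ultimately have A: "AnyPwr (M n) (I1 n) (X n) (cc n) \<ge> 1 - (1 - b) / 4" using B2 by linarith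
      have bb: "b < 1 - (1 - b) / 4" using b by (simp add: field_simps)
      show ?case by (rule less_le_trans[OF bb A])
    qed
  qed
  have bon: "\<forall>\<^sub>F n in sequentially. c_Bon n \<alpha> \<le> sqrt (2 * ln (real n)) + k2"
    using ev4 by eventually_elim (unfold k2_def, rule cBon_bound[OF a_def alpha])
  have sid: "\<forall>\<^sub>F n in sequentially. c_Sid n \<alpha> \<le> sqrt (2 * ln (real n)) + k2"
    using ev4 by eventually_elim (unfold k2_def, rule cSid_bound[OF a_def alpha])
  show ?thesis using main[OF bon] main[OF sid] by blast
qed

end
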